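(* Let $G$ be a persistent graph with vertex order $<$ and let $p,q,r\in V(G)$ with $p<q<r$. If $\{p,q\}\in E(G)$ and $\{p,r\}\in E(G)$ but $\{q,r\}\notin E(G)$, then $p$ and $q$ have a common neighbor $b\in V(G)$ with $q<b<r$.
   Context: A persistent graph is a graph $G$ together with a linear order $v_1<v_2<\dots<v_n$ on $V(G)$ such that (1) $\{v_i,v_{i+1}\}\in E(G)$ for all $i$; (2) X-property: for all $p<q<r<s$, if $\{p,r\}\in E(G)$ and $\{q,s\}\in E(G)$ then $\{p,s\}\in E(G)$; (3) bar-property: if $\{p,q\}\in E(G)$ and $p,q$ are not consecutive in the order, then there is a vertex $r$ with $p<r<q$ adjacent to both $p$ and $q$. *)

theory Defs
  imports Main
begin

(* The linear order on V(G) is the order of the ambient type restricted to V. *)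
definition simple_graph :: "'a set \<Rightarrow> ('a \<Rightarrow> 'a \<Rightarrow> bool) \<Rightarrow> bool" where
  "simple_graph V E \<longleftrightarrow> finite V \<and>
     (\<forall>x y. E x y \<longrightarrow> x \<in> V \<and> y \<in> V) \<and>
     (\<forall>x y. E x y \<longrightarrow> E y x) \<and> (\<forall>x. \<not> E x x)"

definition consecutive :: "'a::linorder set \<Rightarrow> 'a \<Rightarrow> 'a \<Rightarrow> bool" where
  "consecutive V x y \<longleftrightarrow> x \<in> V \<and> y \<in> V \<and> x < y \<and> \<not> (\<exists>z\<in>V. x < z \<and> z < y)"

definition persistent :: "'a::linorder set \<Rightarrow> ('a \<Rightarrow> 'a \<Rightarrow> bool) \<Rightarrow> bool" where
  "persistent V E \<longleftrightarrow> simple_graph V E \<and>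
     \<comment> \<open>(1) consecutive vertices are adjacent\<close>
     (\<forall>x y. consecutive V x y \<longrightarrow> E x y) \<and>
     \<comment> \<open>(2) X-property\<close>
     (\<forall>p\<in>V. \<forall>q\<in>V. \<forall>r\<in>V. \<forall>s\<in>V. p < q \<and> q < r \<and> r < s \<and> E p r \<and> E q s \<longrightarrow> E p s) \<and>
     \<comment> \<open>(3) bar-property\<close>
     (\<forall>p\<in>V. \<forall>q\<in>V. p < q \<and> E p q \<and> \<not> consecutive V p q \<longrightarrow>
        (\<exists>r\<in>V. p < r \<and> r < q \<and> E p r \<and> E r q))"

end

theory Submission
  imports Defs
begin

lemma P_fin: "persistent V E \<Longrightarrow> finite V"
  unfolding persistent_def simple_graph_def by blast
lemma P_sym: "persistent V E \<Longrightarrow> E x y \<Longrightarrow> E y x"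
  unfolding persistent_def simple_graph_def by blast
lemma P_X: "persistent V E \<Longrightarrow> p\<in>V \<Longrightarrow> q\<in>V \<Longrightarrow> r\<in>V \<Longrightarrow> s\<in>V \<Longrightarrow>
  p < q \<Longrightarrow> q < r \<Longrightarrow> r < s \<Longrightarrow> E p r \<Longrightarrow> E q s \<Longrightarrow> E p s"
  unfolding persistent_def by blast
lemma P_bar: "persistent V E \<Longrightarrow> p\<in>V \<Longrightarrow> q\<in>V \<Longrightarrow> p < q \<Longrightarrow> E p q \<Longrightarrow> \<not> consecutive V p q \<Longrightarrow>
  \<exists>r\<in>V. p < r \<and> r < q \<and> E p r \<and> E r q"
  unfolding persistent_def by blast
lemma P_cons: "persistent V E \<Longrightarrow> consecutive V x y \<Longrightarrow> E x y"
  unfolding persistent_def by blast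

lemma succ_ex:
  assumes "persistent V E" "a \<in> V" "q \<in> V" "a < q"
  shows "\<exists>s\<in>V. a < s \<and> s \<le> q \<and> E a s"
proof -
  let ?S = "{x\<in>V. a < x}"
  have f: "finite ?S" using P_fin[OF assms(1)] by simp
  have ne: "?S \<noteq> {}" using assms by auto
  define s where "s = Min ?S"
  have sS: "s \<in> ?S" using Min_in[OF f ne] s_def by simp
  have "s \<le> q" using Min_le[OF f] assms s_def by simp
  moreover have "consecutive V a s"
  proof -
    have "\<not> (\<exists>z\<in>V. a < z \<and> z < s)"
    proof
      assume "\<exists>z\<in>V. a < z \<and> z < s"
      then obtain z where z: "z\<in>V" "a < z" "z < s" by blast
      then have "s \<le> z" using Min_le[OF f] s_def by simp
      then show False using z(3) leD by blast
    qed
    then show ?thesis unfolding consecutive_def using sS assms(2) by blast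
  qed
  ultimately show ?thesis using sS P_cons[OF assms(1)] by blast
qed

lemma inner:
  assumes P: "persistent V E"
    and V: "p \<in> V" "q \<in> V" "m \<in> V" and o: "p < q" "q < m"
    and pq: "E p q" and noP: "\<forall>x\<in>V. q < x \<and> x < m \<longrightarrow> \<not> E p x"
    and IH: "\<And>a q'. a\<in>V \<Longrightarrow> q'\<in>V \<Longrightarrow> p < a \<Longrightarrow> a < q' \<Longrightarrow> q' < m \<Longrightarrow> E a q' \<Longrightarrow> E a m \<Longrightarrow>
              (\<forall>x\<in>V. q' < x \<and> x < m \<longrightarrow> \<not> E a x) \<Longrightarrow> E q' m"
  shows "card {x\<in>V. a < x \<and> x < q} < n \<Longrightarrow> a \<in> V \<Longrightarrow> p < a \<Longrightarrow> a < q \<Longrightarrow> E a m \<Longrightarrow> E q m"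
proof (induction n arbitrary: a)
  case 0
  then show ?case by simp
next
  case (Suc n)
  let ?Q = "{x\<in>V. a < x \<and> x < m \<and> E a x}"
  have f: "finite ?Q" using P_fin[OF P] by simp
  obtain s where s: "s\<in>V" "a < s" "s \<le> q" "E a s" using succ_ex[OF P \<open>a\<in>V\<close> V(2) \<open>a<q\<close>] by blast
  have ne: "?Q \<noteq> {}" using s o(2) le_less_trans by blast
  define q' where "q' = Max ?Q"
  have qQ: "q' \<in> ?Q" using Max_in[OF f ne] q'_def by simp
  have mx: "\<forall>x\<in>V. q' < x \<and> x < m \<longrightarrow> \<not> E a x"
  proof (intro ballI impI notI)
    fix x assume x: "x \<in> V" "q' < x \<and> x < m" "E a x"
    then have "x \<in> ?Q" using qQ by auto
    then have "x \<le> q'" using Max_ge[OF f] q'_def by simp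
    then show False using x leD by blast
  qed
  have le: "q' \<le> q"
  proof (rule ccontr)
    assume "\<not> q' \<le> q"
    then have "q < q'" by simp
    then have "E p q'" using P_X[OF P V(1) \<open>a\<in>V\<close> V(2), of q'] qQ pq Suc.prems(3,4) by blast
    then show False using noP qQ \<open>q < q'\<close> by auto
  qed
  have e: "E q' m" using IH[of a q'] qQ mx Suc.prems(2,3,5) by blast
  show ?case
  proof (cases "q' = q")
    case True then show ?thesis using e by simp
  next
    case False
    then have "q' < q" using le by simp
    have s1: "{x\<in>V. q' < x \<and> x < q} \<subseteq> {x\<in>V. a < x \<and> x < q}"
      using qQ less_trans by blast
    have s2: "q' \<in> {x\<in>V. a < x \<and> x < q}" using qQ \<open>q' < q\<close> by blast
    have sub: "{x\<in>V. q' < x \<and> x < q} \<subset> {x\<in>V. a < x \<and> x < q}"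
      using s1 s2 by blast
    have "card {x\<in>V. q' < x \<and> x < q} < card {x\<in>V. a < x \<and> x < q}"
      using psubset_card_mono[OF _ sub] P_fin[OF P] by simp
    then have "card {x\<in>V. q' < x \<and> x < q} < n" using Suc.prems(1) by simp
    then show ?thesis using Suc.IH[of q'] qQ \<open>q' < q\<close> e less_trans[OF Suc.prems(3)] by blast
  qed
qed

lemma lemA_n:
  assumes P: "persistent V E"
  shows "card {x\<in>V. p < x \<and> x < m} < n \<Longrightarrow> p \<in> V \<Longrightarrow> q \<in> V \<Longrightarrow> m \<in> V \<Longrightarrow> p < q \<Longrightarrow> q < m \<Longrightarrow>
    E p q \<Longrightarrow> E p m \<Longrightarrow> (\<forall>x\<in>V. q < x \<and> x < m \<longrightarrow> \<not> E p x) \<Longrightarrow> E q m"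
proof (induction n arbitrary: p q)
  case 0
  then show ?case by simp
next
  case (Suc n)
  have IH: "E q' m" if "a\<in>V" "q'\<in>V" "p < a" "a < q'" "q' < m" "E a q'" "E a m"
      "\<forall>x\<in>V. q' < x \<and> x < m \<longrightarrow> \<not> E a x" for a q'
  proof -
    have s1: "{x\<in>V. a < x \<and> x < m} \<subseteq> {x\<in>V. p < x \<and> x < m}"
      using that(3) less_trans by blast
    have s2: "a \<in> {x\<in>V. p < x \<and> x < m}" using that(1,3,4,5) less_trans by blast
    have sub: "{x\<in>V. a < x \<and> x < m} \<subset> {x\<in>V. p < x \<and> x < m}"
      using s1 s2 by blast
    have "card {x\<in>V. a < x \<and> x < m} < card {x\<in>V. p < x \<and> x < m}"
      using psubset_card_mono[OF _ sub] P_fin[OF P] by simp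
    then show ?thesis using Suc.IH[of a q'] that Suc.prems(1,4) by auto
  qed
  have nc: "\<not> consecutive V p m" using Suc.prems(3,5,6) unfolding consecutive_def by blast
  obtain m1 where m1: "m1\<in>V" "p < m1" "m1 < m" "E p m1" "E m1 m"
    using P_bar[OF P Suc.prems(2) Suc.prems(4) less_trans[OF Suc.prems(5,6)] Suc.prems(8) nc] by blast
  have "m1 \<le> q" using m1 Suc.prems(9) not_le by blast
  show ?case
  proof (cases "m1 = q")
    case True then show ?thesis using m1 by simp
  next
    case False
    then have "m1 < q" using \<open>m1 \<le> q\<close> by simp
    show ?thesis
      apply (rule inner[OF P Suc.prems(2,3,4,5,6,7,9), where a=m1 and n="Suc (card {x\<in>V. m1 < x \<and> x < q})"])
      using IH apply blast
      using m1 \<open>m1 < q\<close> by simp_all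
  qed
qed

theorem lemma2:
  fixes V :: "'a::linorder set" and E :: "'a \<Rightarrow> 'a \<Rightarrow> bool"
  assumes "persistent V E"
    and "p \<in> V" and "q \<in> V" and "r \<in> V"
    and "p < q" and "q < r"
    and "E p q" and "E p r" and "\<not> E q r"
  shows "\<exists>b\<in>V. q < b \<and> b < r \<and> E p b \<and> E q b"
proof -
  let ?S = "{x\<in>V. q < x \<and> x \<le> r \<and> E p x}"
  have f: "finite ?S" using P_fin[OF assms(1)] by simp
  have ne: "?S \<noteq> {}" using assms by auto
  define m where "m = Min ?S"
  have mS: "m \<in> ?S" using Min_in[OF f ne] m_def by simp
  have mn: "\<forall>x\<in>V. q < x \<and> x < m \<longrightarrow> \<not> E p x"
  proof (intro ballI impI notI)
    fix x assume x: "x \<in> V" "q < x \<and> x < m" "E p x"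
    then have "x \<in> ?S" using mS by auto
    then have "m \<le> x" using Min_le[OF f] m_def by simp
    then show False using x leD by blast
  qed
  have "E q m"
    using lemA_n[OF assms(1) lessI, where p=p and q=q and m=m] assms(2,3,5,7) mS mn by blast
  moreover have "m \<noteq> r" using calculation assms(9) by blast
  moreover have "m < r" using mS \<open>m \<noteq> r\<close> less_le by blast
  ultimately show ?thesis using mS by blast
qed

end
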